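(* Let $f\colon\mathbb{R}^2\to\mathbb{R}^3$ be a regular smooth surface parametrization without parabolic and umbilic points, oriented by a smooth unit normal field $n$, with principal curvatures $\kappa_1\neq\kappa_2$ (both nonzero) with respect to $n$. Let $s$ be an attached tangent sphere congruence of $f$ with signed radius function $r$ (definitions in the context). Let $(t_1,t_2,n)$ be an orthonormal principal frame at a point $f(u,v)$, $t_i$ being the principal direction of $\kappa_i$. Then two non-parallel tangent vectors $\bar a=\bar a_1t_1+\bar a_2t_2$ and $\bar b=\bar b_1t_1+\bar b_2t_2$ at $f(u,v)$ are L-conjugate with respect to $s$ if and only if $$(\kappa_2^{-1}-r)\,\bar a_1\bar b_1+(\kappa_1^{-1}-r)\,\bar a_2\bar b_2=0,$$ where $r$ and $\kappa_1,\kappa_2$ are evaluated at $(u,v)$.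
   Context: $\mathbb{R}^{3,1}$ is $\mathbb{R}^4$ with inner product $\langle\langle X,Y\rangle\rangle=X_1Y_1+X_2Y_2+X_3Y_3-X_4Y_4$. Principal curvatures are the eigenvalues of the shape operator $-dn$ (so in a principal parametrization $n_u=-\kappa_1 f_u$, $n_v=-\kappa_2f_v$). Two tangent vectors $a,\bar a$ are conjugate (in the ordinary sense) if $\mathrm{II}(a,\bar a)=0$ for the second fundamental form with respect to $n$; in a principal frame this reads $\kappa_1a_1\bar a_1+\kappa_2a_2\bar a_2=0$. An oriented sphere is a pair $(c,\rho)$ with center $c\in\mathbb{R}^3$ and signed radius $\rho\in\mathbb{R}$ (radius zero allowed). The oriented tangent plane $p(u,v)$ at $f(u,v)$ is the plane through $f(u,v)$ with unit normal $n(u,v)$; it is written $\langle n,x\rangle+h=0$ with $h=-\langle n,f\rangle$. An attached tangent sphere congruence is a map assigning to each $(u,v)$ an oriented sphere $s(u,v)$ with signed radius $r(u,v)$ and center $f(u,v)+r(u,v)n(u,v)$ (i.e., in oriented contact with $p(u,v)$ at $f(u,v)$) such that its Minkowski lift $S(u,v):=(f+rn,\,r)\in\mathbb{R}^{3,1}$ is a regular smooth net ($S_u\not\parallel S_v$). The Minkowski lift of $p(u,v)$ is the isotropic hyperplane $P(u,v)=\{(x,x_4): x_4=\langle n,x\rangle+h\}$, with normal $N=(n,1)$. For a regular net $S$ with attached hyperplanes $P$, two non-parallel tangent vectors $T_1,T_2$ of $S$ are L-conjugate with respect to $P$ if there is a diffeomorphism $D$ of $\mathbb{R}^2$ such that for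 $\bar S=S\circ D,\bar P=P\circ D$, at the relevant parameter, $\bar S_u\parallel T_1$, $\bar S_v\parallel T_2$ and $\bar S_u,\bar S_v,\bar S_{uv}$ are parallel to $\bar P$. Two non-parallel tangent vectors $a,b$ of $f$ at $f(u,v)$ are L-conjugate with respect to $s$ if there is a diffeomorphism $D$ of $\mathbb{R}^2$ such that, with $\bar f=f\circ D$ and $\bar S,\bar P$ the Minkowski lifts of $s\circ D,p\circ D$, at the relevant parameter $\bar f_u$ is conjugate to $a$, $\bar f_v$ is conjugate to $b$, and $\bar S_u$ is L-conjugate to $\bar S_v$ with respect to $\bar P$. *)

theory Defs
  imports "HOL-Analysis.Analysis"
begin

text \<open>Parameters (u,v) range over real \<times> real; the surface lives in real^3;
  Minkowski space R^{3,1} is modelled as real^3 \<times> real, (x, x4).\<close>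

type_synonym param = "real \<times> real"
type_synonym mink = "(real^3) \<times> real"

fun Ck :: "nat \<Rightarrow> ('a::euclidean_space \<Rightarrow> 'b::euclidean_space) \<Rightarrow> bool" where
  "Ck 0 F = continuous_on UNIV F"
| "Ck (Suc k) F = (\<exists>F'. (\<forall>x. (F has_derivative F' x) (at x)) \<and> (\<forall>v. Ck k (\<lambda>x. F' x v)))"

definition smooth :: "('a::euclidean_space \<Rightarrow> 'b::euclidean_space) \<Rightarrow> bool" where
  "smooth F \<longleftrightarrow> (\<forall>k. Ck k F)"

definition diffeo :: "(param \<Rightarrow> param) \<Rightarrow> bool" where
  "diffeo D \<longleftrightarrow> bij D \<and> smooth D \<and> smooth (inv D)"

definition dF :: "('a::euclidean_space \<Rightarrow> 'b::euclidean_space) \<Rightarrow> 'a \<Rightarrow> 'a \<Rightarrow> 'b" where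
  "dF F p = frechet_derivative F (at p)"

definition pu :: "(param \<Rightarrow> 'b::euclidean_space) \<Rightarrow> param \<Rightarrow> 'b" where
  "pu F p = dF F p (1, 0)"

definition pv :: "(param \<Rightarrow> 'b::euclidean_space) \<Rightarrow> param \<Rightarrow> 'b" where
  "pv F p = dF F p (0, 1)"

definition puv :: "(param \<Rightarrow> 'b::euclidean_space) \<Rightarrow> param \<Rightarrow> 'b" where
  "puv F p = pv (pu F) p"

definition regular_net :: "(param \<Rightarrow> 'b::euclidean_space) \<Rightarrow> bool" where
  "regular_net F \<longleftrightarrow> (\<forall>p a b. a *\<^sub>R pu F p + b *\<^sub>R pv F p = 0 \<longrightarrow> a = 0 \<and> b = 0)"

definition non_parallel :: "'b::real_vector \<Rightarrow> 'b \<Rightarrow> bool" where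
  "non_parallel x y \<longleftrightarrow> (\<forall>a b. a *\<^sub>R x + b *\<^sub>R y = 0 \<longrightarrow> a = 0 \<and> b = 0)"

definition vec_parallel :: "'b::real_vector \<Rightarrow> 'b \<Rightarrow> bool" where
  "vec_parallel x y \<longleftrightarrow> x \<noteq> 0 \<and> y \<noteq> 0 \<and> (\<exists>c. x = c *\<^sub>R y)"

definition parallel_to :: "'b::real_vector \<Rightarrow> 'b set \<Rightarrow> bool" where
  "parallel_to X H \<longleftrightarrow> (\<forall>Y\<in>H. Y + X \<in> H)"

definition unit_normal_field :: "(param \<Rightarrow> real^3) \<Rightarrow> (param \<Rightarrow> real^3) \<Rightarrow> bool" where
  "unit_normal_field f n \<longleftrightarrow> (\<forall>p. norm (n p) = 1 \<and> (\<forall>\<xi>. n p \<bullet> dF f p \<xi> = 0))"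

text \<open>Umbilic point: shape operator -dn is a multiple of the identity;
  parabolic point: shape operator is singular (Gaussian curvature zero).\<close>
definition umbilic :: "(param \<Rightarrow> real^3) \<Rightarrow> (param \<Rightarrow> real^3) \<Rightarrow> param \<Rightarrow> bool" where
  "umbilic f n p \<longleftrightarrow> (\<exists>k. \<forall>\<xi>. dF n p \<xi> = - k *\<^sub>R dF f p \<xi>)"

definition parabolic :: "(param \<Rightarrow> real^3) \<Rightarrow> (param \<Rightarrow> real^3) \<Rightarrow> param \<Rightarrow> bool" where
  "parabolic f n p \<longleftrightarrow> (\<exists>\<xi>. \<xi> \<noteq> 0 \<and> dF n p \<xi> = 0)"

definition principal_dir :: "(param \<Rightarrow> real^3) \<Rightarrow> (param \<Rightarrow> real^3) \<Rightarrow> param \<Rightarrow> real^3 \<Rightarrow> real \<Rightarrow> bool" where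
  "principal_dir f n p t k \<longleftrightarrow> (\<exists>\<xi>. dF f p \<xi> = t \<and> dF n p \<xi> = - k *\<^sub>R t)"

text \<open>Ordinary conjugacy of tangent vectors X, Y at f(p): II(X,Y) = 0,
  II(df \<xi>, df \<eta>) = - dn(\<xi>) . df(\<eta>).\<close>
definition conjugate :: "(param \<Rightarrow> real^3) \<Rightarrow> (param \<Rightarrow> real^3) \<Rightarrow> param \<Rightarrow> real^3 \<Rightarrow> real^3 \<Rightarrow> bool" where
  "conjugate f n p X Y \<longleftrightarrow>
     (\<exists>\<xi> \<eta>. X = dF f p \<xi> \<and> Y = dF f p \<eta> \<and> - (dF n p \<xi> \<bullet> dF f p \<eta>) = 0)"

definition sphere_lift :: "(param \<Rightarrow> real^3) \<Rightarrow> (param \<Rightarrow> real^3) \<Rightarrow> (param \<Rightarrow> real) \<Rightarrow> param \<Rightarrow> mink" where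
  "sphere_lift f n r p = (f p + r p *\<^sub>R n p, r p)"

text \<open>Minkowski lift of the oriented tangent plane <n,x> + h = 0, h = -<n,f>.\<close>
definition plane_lift :: "(param \<Rightarrow> real^3) \<Rightarrow> (param \<Rightarrow> real^3) \<Rightarrow> param \<Rightarrow> mink set" where
  "plane_lift f n p = {(x, x4). x4 = n p \<bullet> x + (- (n p \<bullet> f p))}"

definition L_conj_net :: "(param \<Rightarrow> mink) \<Rightarrow> (param \<Rightarrow> mink set) \<Rightarrow> param \<Rightarrow> mink \<Rightarrow> mink \<Rightarrow> bool" where
  "L_conj_net S P q T1 T2 \<longleftrightarrow>
     (\<exists>D q'. diffeo D \<and> D q' = q \<and>
        vec_parallel (pu (S \<circ> D) q') T1 \<and> vec_parallel (pv (S \<circ> D) q') T2 \<and>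
        parallel_to (pu (S \<circ> D) q') ((P \<circ> D) q') \<and>
        parallel_to (pv (S \<circ> D) q') ((P \<circ> D) q') \<and>
        parallel_to (puv (S \<circ> D) q') ((P \<circ> D) q'))"

definition L_conj :: "(param \<Rightarrow> real^3) \<Rightarrow> (param \<Rightarrow> real^3) \<Rightarrow> (param \<Rightarrow> real) \<Rightarrow> param \<Rightarrow> real^3 \<Rightarrow> real^3 \<Rightarrow> bool" where
  "L_conj f n r p a b \<longleftrightarrow>
     (\<exists>D q. diffeo D \<and> D q = p \<and>
        conjugate f n p (pu (f \<circ> D) q) a \<and>
        conjugate f n p (pv (f \<circ> D) q) b \<and>
        L_conj_net (sphere_lift f n r \<circ> D) (plane_lift f n \<circ> D) q
           (pu (sphere_lift f n r \<circ> D) q) (pv (sphere_lift f n r \<circ> D) q))"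

end

theory Submission
  imports Defs "HOL-Analysis.Analysis"
begin

definition C2 :: "(param \<Rightarrow> 'b::euclidean_space) \<Rightarrow> bool" where
 "C2 F \<longleftrightarrow> (\<forall>x. F differentiable at x) \<and> (\<forall>v x. (\<lambda>y. frechet_derivative F (at y) v) differentiable at x)"

lemma smooth_C2: assumes "smooth F" shows "C2 F"
proof -
  have "Ck (Suc (Suc 0)) F" using assms unfolding smooth_def by blast
  then obtain F' where d: "\<forall>x. (F has_derivative F' x) (at x)" and c: "\<forall>v. Ck (Suc 0) (\<lambda>x. F' x v)"
    by auto
  have fe: "frechet_derivative F (at y) = F' y" for y using d frechet_derivative_at by metis
  show ?thesis unfolding C2_def fe
  proof (intro conjI allI)
    show "F differentiable at x" for x using d differentiable_def by blast
    show "(\<lambda>y. F' y v) differentiable at x" for v x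
    proof -
      from c[rule_format, of v] obtain G where "\<forall>x. ((\<lambda>x. F' x v) has_derivative G x) (at x)"
        by (simp only: Ck.simps) blast
      then show ?thesis unfolding differentiable_def by blast
    qed
  qed
qed

lemma lin_pair: assumes "linear L" shows "L (a, b) = a *\<^sub>R L (1, 0) + b *\<^sub>R L (0, 1)"
proof -
  have "(a, b) = a *\<^sub>R (1::real, 0::real) + b *\<^sub>R (0, 1)" by simp
  then show ?thesis using assms by (metis linear_add linear_scale)
qed

lemma C2_deriv: "C2 F \<Longrightarrow> (F has_derivative frechet_derivative F (at x)) (at x)"
  unfolding C2_def using frechet_derivative_works by blast

lemma C2_lin: "C2 F \<Longrightarrow> linear (frechet_derivative F (at x))"
  using C2_deriv has_derivative_linear by blast

lemma C2_comp:
  fixes F :: "param \<Rightarrow> 'b::euclidean_space" and E :: "param \<Rightarrow> param"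
  assumes F: "C2 F" and E: "C2 E"
  shows "C2 (F \<circ> E)"
proof -
  have fd: "frechet_derivative (F \<circ> E) (at x) = frechet_derivative F (at (E x)) \<circ> frechet_derivative E (at x)" for x
    using diff_chain_at[OF C2_deriv[OF E] C2_deriv[OF F]] frechet_derivative_at by metis
  show ?thesis unfolding C2_def
  proof (intro conjI allI)
    show "(F \<circ> E) differentiable at x" for x
      using diff_chain_at[OF C2_deriv[OF E] C2_deriv[OF F]] differentiable_def by blast
    fix v x
    have eq: "(\<lambda>y. frechet_derivative (F \<circ> E) (at y) v) = (\<lambda>y. fst (frechet_derivative E (at y) v) *\<^sub>R frechet_derivative F (at (E y)) (1,0)
       + snd (frechet_derivative E (at y) v) *\<^sub>R frechet_derivative F (at (E y)) (0,1))"
      apply (rule ext)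
      apply (simp add: fd)
      by (metis lin_pair[OF C2_lin[OF F]] prod.collapse)
    have dE: "(\<lambda>y. frechet_derivative E (at y) v) differentiable at x" using E unfolding C2_def by blast
    have d1: "(\<lambda>y. fst (frechet_derivative E (at y) v)) differentiable at x"
      using differentiable_compose[OF _ dE, of fst] bounded_linear_fst bounded_linear_imp_differentiable by blast
    have d2: "(\<lambda>y. snd (frechet_derivative E (at y) v)) differentiable at x"
      using differentiable_compose[OF _ dE, of snd] bounded_linear_snd bounded_linear_imp_differentiable by blast
    have dEx: "E differentiable at x" using E unfolding C2_def by blast
    have d3: "(\<lambda>y. frechet_derivative F (at (E y)) w) differentiable at x" for w
      using differentiable_compose[OF _ dEx, of "\<lambda>z. frechet_derivative F (at z) w"] F unfolding C2_def by blast
    show "(\<lambda>y. frechet_derivative (F \<circ> E) (at y) v) differentiable at x"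
      unfolding eq using d1 d2 d3 by (intro differentiable_add differentiable_scaleR) auto
  qed
qed

lemma par_iff: "parallel_to X (plane_lift f n y) \<longleftrightarrow> snd X = n y \<bullet> fst X"
proof
  assume a: "parallel_to X (plane_lift f n y)"
  have "(f y, 0) \<in> plane_lift f n y" unfolding plane_lift_def by simp
  then have "(f y, 0) + X \<in> plane_lift f n y" using a unfolding parallel_to_def by blast
  then show "snd X = n y \<bullet> fst X" unfolding plane_lift_def
    by (cases X) (simp add: inner_add_right)
next
  assume "snd X = n y \<bullet> fst X"
  then show "parallel_to X (plane_lift f n y)" unfolding parallel_to_def plane_lift_def
    by (cases X) (auto simp: inner_add_right)
qed

lemma r_deriv:
  assumes SC: "C2 (sphere_lift f n r)"
  shows "(r has_derivative (\<lambda>w. snd (frechet_derivative (sphere_lift f n r) (at y) w))) (at y)"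
proof -
  have "((\<lambda>y. snd (sphere_lift f n r y)) has_derivative (\<lambda>w. snd (frechet_derivative (sphere_lift f n r) (at y) w))) (at y)"
    using has_derivative_snd[OF C2_deriv[OF SC]] .
  then show ?thesis by (simp add: sphere_lift_def)
qed

lemma S_deriv:
  assumes fC: "C2 f" and nC: "C2 n" and SC: "C2 (sphere_lift f n r)"
  shows "frechet_derivative (sphere_lift f n r) (at y) w =
     (frechet_derivative f (at y) w + frechet_derivative r (at y) w *\<^sub>R n y + r y *\<^sub>R frechet_derivative n (at y) w,
      frechet_derivative r (at y) w)"
proof -
  have rd: "(r has_derivative frechet_derivative r (at y)) (at y)"
    using r_deriv[OF SC] frechet_derivative_works differentiable_def by blast
  have "((\<lambda>y. (f y + r y *\<^sub>R n y, r y)) has_derivative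
     (\<lambda>w. (frechet_derivative f (at y) w + (r y *\<^sub>R frechet_derivative n (at y) w + frechet_derivative r (at y) w *\<^sub>R n y),
      frechet_derivative r (at y) w))) (at y)"
    by (intro has_derivative_Pair has_derivative_add has_derivative_scaleR C2_deriv[OF fC] C2_deriv[OF nC] rd)
  then have SD: "(sphere_lift f n r has_derivative
     (\<lambda>w. (frechet_derivative f (at y) w + (r y *\<^sub>R frechet_derivative n (at y) w + frechet_derivative r (at y) w *\<^sub>R n y),
      frechet_derivative r (at y) w))) (at y)"
    by (simp add: sphere_lift_def[abs_def])
  then have "frechet_derivative (sphere_lift f n r) (at y) w = (frechet_derivative f (at y) w + (r y *\<^sub>R frechet_derivative n (at y) w + frechet_derivative r (at y) w *\<^sub>R n y),
      frechet_derivative r (at y) w)" by (simp add: frechet_derivative_at[OF SD, symmetric])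
  then show ?thesis by (simp add: add_ac)
qed

lemma n_perp:
  assumes nC: "C2 n" and nn: "unit_normal_field f n"
  shows "n y \<bullet> frechet_derivative n (at y) w = 0"
proof -
  have d: "((\<lambda>y. n y \<bullet> n y) has_derivative (\<lambda>h. n y \<bullet> frechet_derivative n (at y) h + frechet_derivative n (at y) h \<bullet> n y)) (at y)"
    by (intro has_derivative_inner C2_deriv[OF nC])
  have c1: "n y \<bullet> n y = 1" for y using nn norm_eq_1 unfolding unit_normal_field_def by blast
  have c: "(\<lambda>y. n y \<bullet> n y) = (\<lambda>y. 1)" using c1 by (intro ext) simp
  have "((\<lambda>y. n y \<bullet> n y) has_derivative (\<lambda>h. 0)) (at y)" unfolding c by simp
  from has_derivative_unique[OF d this] have "(\<lambda>h. n y \<bullet> frechet_derivative n (at y) h + frechet_derivative n (at y) h \<bullet> n y) = (\<lambda>h. 0)" .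
  then have "n y \<bullet> frechet_derivative n (at y) w + frechet_derivative n (at y) w \<bullet> n y = 0" by (rule fun_cong)
  then show ?thesis by (simp add: inner_commute)
qed

lemma lemA:
  fixes E :: "param \<Rightarrow> param"
  assumes fC: "C2 f" and nC: "C2 n" and SC: "C2 (sphere_lift f n r)" and EC: "C2 E"
    and nn: "unit_normal_field f n"
  shows "pu (sphere_lift f n r \<circ> E) x = dF (sphere_lift f n r) (E x) (dF E x (1,0))"
    "pv (sphere_lift f n r \<circ> E) x = dF (sphere_lift f n r) (E x) (dF E x (0,1))"
    "parallel_to (pu (sphere_lift f n r \<circ> E) x) (plane_lift f n (E x))"
    "parallel_to (pv (sphere_lift f n r \<circ> E) x) (plane_lift f n (E x))"
    "parallel_to (puv (sphere_lift f n r \<circ> E) x) (plane_lift f n (E x)) \<longleftrightarrow>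
      dF n (E x) (dF E x (0,1)) \<bullet> (dF f (E x) (dF E x (1,0)) + r (E x) *\<^sub>R dF n (E x) (dF E x (1,0))) = 0"
proof -
  let ?S = "sphere_lift f n r"
  let ?G = "?S \<circ> E"
  have GC: "C2 ?G" using C2_comp[OF SC EC] .
  have fd: "frechet_derivative ?G (at x) = frechet_derivative ?S (at (E x)) \<circ> frechet_derivative E (at x)" for x
    using diff_chain_at[OF C2_deriv[OF EC] C2_deriv[OF SC]] frechet_derivative_at by metis
  show pu: "pu ?G x = dF ?S (E x) (dF E x (1,0))" for x unfolding pu_def dF_def fd by simp
  show pv: "pv ?G x = dF ?S (E x) (dF E x (0,1))" for x unfolding pv_def dF_def fd by simp
  have fperp: "n y \<bullet> frechet_derivative f (at y) w = 0" for y w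
    using nn unfolding unit_normal_field_def dF_def by blast
  have np: "n y \<bullet> frechet_derivative n (at y) w = 0" for y w using n_perp[OF nC nn] .
  have nn1: "n y \<bullet> n y = 1" for y using nn norm_eq_1 unfolding unit_normal_field_def by blast
  have key: "snd (dF ?S y w) = n y \<bullet> fst (dF ?S y w)" for y w
    unfolding dF_def S_deriv[OF fC nC SC]
    by (simp add: inner_add_right fperp np nn1)
  show "parallel_to (pu ?G x) (plane_lift f n (E x))" unfolding par_iff pu using key by blast
  show "parallel_to (pv ?G x) (plane_lift f n (E x))" unfolding par_iff pv using key by blast
  define g where "g = pu ?G"
  have psi: "snd (g y) - n (E y) \<bullet> fst (g y) = 0" for y unfolding g_def pu using key by simp
  have gd: "g differentiable at x" unfolding g_def pu_def dF_def using GC unfolding C2_def by blast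
  define Lg where "Lg = frechet_derivative g (at x)"
  have gD: "(g has_derivative Lg) (at x)" unfolding Lg_def using gd frechet_derivative_works by blast
  have nE: "((\<lambda>y. n (E y)) has_derivative (\<lambda>h. frechet_derivative n (at (E x)) (frechet_derivative E (at x) h))) (at x)"
    using has_derivative_compose[OF C2_deriv[OF EC] C2_deriv[OF nC]] .
  have d: "((\<lambda>y. snd (g y) - n (E y) \<bullet> fst (g y)) has_derivative
     (\<lambda>h. snd (Lg h) - (n (E x) \<bullet> fst (Lg h) + frechet_derivative n (at (E x)) (frechet_derivative E (at x) h) \<bullet> fst (g x)))) (at x)"
    by (intro has_derivative_diff has_derivative_snd has_derivative_fst has_derivative_inner gD nE)
  have "((\<lambda>y. snd (g y) - n (E y) \<bullet> fst (g y)) has_derivative (\<lambda>h. 0)) (at x)" unfolding psi by simp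
  from has_derivative_unique[OF d this]
  have z: "snd (Lg (0,1)) - (n (E x) \<bullet> fst (Lg (0,1)) + frechet_derivative n (at (E x)) (frechet_derivative E (at x) (0,1)) \<bullet> fst (g x)) = 0"
    by metis
  have puv: "puv ?G x = Lg (0,1)" unfolding puv_def pv_def dF_def Lg_def g_def by simp
  have gx: "fst (g x) = dF f (E x) (dF E x (1,0)) + dF r (E x) (dF E x (1,0)) *\<^sub>R n (E x) + r (E x) *\<^sub>R dF n (E x) (dF E x (1,0))"
    unfolding g_def pu unfolding dF_def S_deriv[OF fC nC SC] by simp
  have "dF n (E x) (dF E x (0,1)) \<bullet> fst (g x) = dF n (E x) (dF E x (0,1)) \<bullet> (dF f (E x) (dF E x (1,0)) + r (E x) *\<^sub>R dF n (E x) (dF E x (1,0)))"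
  proof -
    have "dF n (E x) (dF E x (0,1)) \<bullet> n (E x) = 0" using np by (simp add: inner_commute dF_def)
    then show ?thesis unfolding gx inner_add_right inner_scaleR_right by simp
  qed
  then show "parallel_to (puv ?G x) (plane_lift f n (E x)) \<longleftrightarrow>
      dF n (E x) (dF E x (0,1)) \<bullet> (dF f (E x) (dF E x (1,0)) + r (E x) *\<^sub>R dF n (E x) (dF E x (1,0))) = 0"
  proof -
    have "snd (Lg (0,1)) = n (E x) \<bullet> fst (Lg (0,1)) \<longleftrightarrow> frechet_derivative n (at (E x)) (frechet_derivative E (at x) (0,1)) \<bullet> fst (g x) = 0"
      using z by linarith
    then show ?thesis unfolding par_iff puv using \<open>dF n (E x) (dF E x (0,1)) \<bullet> fst (g x) = _\<close> unfolding dF_def by simp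
  qed
qed

lemma Ck_const: "Ck k (\<lambda>x::'a::euclidean_space. c::'b::euclidean_space)"
proof (induction k arbitrary: c)
  case 0 then show ?case by simp
next
  case (Suc k)
  show ?case by (simp only: Ck.simps) (rule exI[of _ "\<lambda>x h. 0"], simp add: Suc)
qed

lemma Ck_affine:
  fixes L :: "'a::euclidean_space \<Rightarrow> 'b::euclidean_space"
  assumes "linear L" shows "Ck k (\<lambda>x. c + L x)"
proof (cases k)
  case 0
  have bl: "bounded_linear L" using assms linear_conv_bounded_linear by blast
  show ?thesis unfolding 0 using bl by (simp add: continuous_on_add linear_continuous_on)
next
  case (Suc m)
  have bl: "bounded_linear L" using assms linear_conv_bounded_linear by blast
  have d: "((\<lambda>x. c + L x) has_derivative L) (at x)" for x
    using has_derivative_add[OF has_derivative_const bounded_linear_imp_has_derivative[OF bl]] by simp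
  show ?thesis unfolding Suc
    by (simp only: Ck.simps) (rule exI[of _ "\<lambda>x. L"], simp add: d Ck_const)
qed

lemma smooth_affine:
  fixes L :: "'a::euclidean_space \<Rightarrow> 'b::euclidean_space"
  assumes "linear L" shows "smooth (\<lambda>x. c + L x)"
  unfolding smooth_def using Ck_affine[OF assms] by blast

lemma affine_deriv:
  fixes L :: "'a::euclidean_space \<Rightarrow> 'b::euclidean_space"
  assumes "linear L" shows "dF (\<lambda>x. c + L x) z = L"
proof -
  have bl: "bounded_linear L" using assms linear_conv_bounded_linear by blast
  have d: "((\<lambda>x. c + L x) has_derivative L) (at z)"
    using has_derivative_add[OF has_derivative_const bounded_linear_imp_has_derivative[OF bl]] by simp
  then show ?thesis unfolding dF_def using frechet_derivative_at by metis
qed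

lemma lin_M: "linear (\<lambda>z::param. fst z *\<^sub>R \<alpha> + snd z *\<^sub>R (\<beta>::param))"
  by (rule linearI) (auto simp: algebra_simps)

lemma inv2:
  fixes a1 a2 b1 b2 u1 u2 :: real assumes d: "a1*b2 - a2*b1 \<noteq> 0"
  shows "((u1*b2 - u2*b1)/(a1*b2 - a2*b1)) * a1 + ((a1*u2 - a2*u1)/(a1*b2 - a2*b1)) * b1 = u1"
    and "((u1*b2 - u2*b1)/(a1*b2 - a2*b1)) * a2 + ((a1*u2 - a2*u1)/(a1*b2 - a2*b1)) * b2 = u2"
proof -
  have "((u1*b2 - u2*b1)/(a1*b2 - a2*b1)) * a1 + ((a1*u2 - a2*u1)/(a1*b2 - a2*b1)) * b1
      = ((u1*b2 - u2*b1) * a1 + (a1*u2 - a2*u1) * b1) / (a1*b2 - a2*b1)" by (simp add: add_divide_distrib)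
  also have "(u1*b2 - u2*b1) * a1 + (a1*u2 - a2*u1) * b1 = u1 * (a1*b2 - a2*b1)" by (simp add: algebra_simps)
  finally show "((u1*b2 - u2*b1)/(a1*b2 - a2*b1)) * a1 + ((a1*u2 - a2*u1)/(a1*b2 - a2*b1)) * b1 = u1" using d by simp
  have "((u1*b2 - u2*b1)/(a1*b2 - a2*b1)) * a2 + ((a1*u2 - a2*u1)/(a1*b2 - a2*b1)) * b2
      = ((u1*b2 - u2*b1) * a2 + (a1*u2 - a2*u1) * b2) / (a1*b2 - a2*b1)" by (simp add: add_divide_distrib)
  also have "(u1*b2 - u2*b1) * a2 + (a1*u2 - a2*u1) * b2 = u2 * (a1*b2 - a2*b1)" by (simp add: algebra_simps)
  finally show "((u1*b2 - u2*b1)/(a1*b2 - a2*b1)) * a2 + ((a1*u2 - a2*u1)/(a1*b2 - a2*b1)) * b2 = u2" using d by simp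
qed

lemma diffeo_affine:
  fixes p \<alpha> \<beta> :: param
  assumes det: "fst \<alpha> * snd \<beta> - snd \<alpha> * fst \<beta> \<noteq> 0"
  shows "diffeo (\<lambda>z. p + (fst z *\<^sub>R \<alpha> + snd z *\<^sub>R \<beta>))"
proof -
  define \<Delta> where "\<Delta> = fst \<alpha> * snd \<beta> - snd \<alpha> * fst \<beta>"
  have \<Delta>: "\<Delta> \<noteq> 0" using det \<Delta>_def by simp
  define N where "N w = ((fst w * snd \<beta> - snd w * fst \<beta>) / \<Delta>, (fst \<alpha> * snd w - snd \<alpha> * fst w) / \<Delta>)" for w :: param
  have linN: "linear N" unfolding N_def
    by (rule linearI) (auto simp: algebra_simps add_divide_distrib diff_divide_distrib)
  define D where "D = (\<lambda>z. p + (fst z *\<^sub>R \<alpha> + snd z *\<^sub>R \<beta>))"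
  define g where "g = (\<lambda>w. (- N p) + N w)"
  have gN: "g w = N (w - p)" for w unfolding g_def using linear_diff[OF linN] by simp
  have gD: "g (D z) = z" for z
    unfolding gN D_def N_def using \<Delta> by (simp add: prod_eq_iff divide_eq_eq, simp add: \<Delta>_def algebra_simps)
  have Dg: "D (g w) = w" for w
  proof -
    have d: "fst \<alpha> * snd \<beta> - snd \<alpha> * fst \<beta> \<noteq> 0" using \<Delta> unfolding \<Delta>_def by simp
    note i = inv2[OF d, of "fst w - fst p" "snd w - snd p"]
    show ?thesis unfolding gN D_def N_def \<Delta>_def using i
      by (simp add: prod_eq_iff mult.commute)
  qed
  have inv: "inv D = g" by (rule inv_equality) (auto simp: gD Dg)
  have bij: "bij D" by (rule o_bij[of g]) (auto simp: gD Dg fun_eq_iff)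
  have sD: "smooth D" unfolding D_def by (rule smooth_affine[OF lin_M])
  have sg: "smooth g" unfolding g_def by (rule smooth_affine[OF linN])
  show ?thesis unfolding diffeo_def D_def[symmetric] inv using bij sD sg by blast
qed

lemma Ck_id_eq: "(\<lambda>z::param. (0::param) + (fst z *\<^sub>R (1,0) + snd z *\<^sub>R (0,1))) = id"
  by (auto simp: fun_eq_iff)

lemma diffeo_id: "diffeo (id :: param \<Rightarrow> param)"
  using diffeo_affine[of "(1,0)" "(0,1)" 0] Ck_id_eq by simp

lemma dF_lin: "C2 F \<Longrightarrow> linear (dF F x)"
  unfolding dF_def by (rule C2_lin)

lemma pu_comp:
  fixes E :: "param \<Rightarrow> param"
  assumes "C2 F" "C2 E"
  shows "pu (F \<circ> E) x = dF F (E x) (dF E x (1,0))" "pv (F \<circ> E) x = dF F (E x) (dF E x (0,1))"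
proof -
  have fd: "frechet_derivative (F \<circ> E) (at x) = frechet_derivative F (at (E x)) \<circ> frechet_derivative E (at x)"
    using diff_chain_at[OF C2_deriv[OF assms(2)] C2_deriv[OF assms(1)]] frechet_derivative_at by metis
  show "pu (F \<circ> E) x = dF F (E x) (dF E x (1,0))" "pv (F \<circ> E) x = dF F (E x) (dF E x (0,1))"
    unfolding pu_def pv_def dF_def fd by simp_all
qed

lemma ip2:
  fixes t1 t2 :: "real^3"
  assumes "t1 \<bullet> t1 = 1" "t2 \<bullet> t2 = 1" "t1 \<bullet> t2 = 0"
  shows "(u1 *\<^sub>R t1 + u2 *\<^sub>R t2) \<bullet> (v1 *\<^sub>R t1 + v2 *\<^sub>R t2) = u1 * v1 + u2 * v2"
proof -
  have "t2 \<bullet> t1 = 0" using assms(3) by (simp add: inner_commute)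
  then show ?thesis using assms by (simp add: inner_add_left inner_add_right)
qed

lemma par2:
  fixes u1 u2 w1 w2 :: real
  assumes "u1 * w2 - u2 * w1 = 0" "w1 \<noteq> 0 \<or> w2 \<noteq> 0"
  shows "\<exists>l. u1 = l * w1 \<and> u2 = l * w2"
proof (cases "w1 = 0")
  case True
  then have "w2 \<noteq> 0" using assms by simp
  then show ?thesis using assms True by (intro exI[of _ "u2 / w2"]) auto
next
  case False
  then show ?thesis using assms by (intro exI[of _ "u1 / w1"]) (auto simp: field_simps)
qed

theorem theorem2:
  fixes f n :: "real \<times> real \<Rightarrow> real^3" and r :: "real \<times> real \<Rightarrow> real"
    and p :: "real \<times> real" and t1 t2 :: "real^3" and \<kappa>1 \<kappa>2 a1 a2 b1 b2 :: real
  assumes f_smooth: "smooth f" and f_regular: "regular_net f"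
    and n_smooth: "smooth n" and n_normal: "unit_normal_field f n"
    and no_umbilic: "\<forall>q. \<not> umbilic f n q" and no_parabolic: "\<forall>q. \<not> parabolic f n q"
    and S_smooth: "smooth (sphere_lift f n r)" and S_regular: "regular_net (sphere_lift f n r)"
    and frame: "norm t1 = 1" "norm t2 = 1" "t1 \<bullet> t2 = 0" "t1 \<bullet> n p = 0" "t2 \<bullet> n p = 0"
    and principal: "principal_dir f n p t1 \<kappa>1" "principal_dir f n p t2 \<kappa>2"
    and kappa: "\<kappa>1 \<noteq> \<kappa>2" "\<kappa>1 \<noteq> 0" "\<kappa>2 \<noteq> 0"
    and nonpar: "non_parallel (a1 *\<^sub>R t1 + a2 *\<^sub>R t2) (b1 *\<^sub>R t1 + b2 *\<^sub>R t2)"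
  shows "L_conj f n r p (a1 *\<^sub>R t1 + a2 *\<^sub>R t2) (b1 *\<^sub>R t1 + b2 *\<^sub>R t2) \<longleftrightarrow>
         (inverse \<kappa>2 - r p) * a1 * b1 + (inverse \<kappa>1 - r p) * a2 * b2 = 0"
proof -
  let ?S = "sphere_lift f n r"
  have fC: "C2 f" using f_smooth by (rule smooth_C2)
  have nC: "C2 n" using n_smooth by (rule smooth_C2)
  have SC: "C2 ?S" using S_smooth by (rule smooth_C2)
  obtain \<xi>1 where x1: "dF f p \<xi>1 = t1" "dF n p \<xi>1 = - \<kappa>1 *\<^sub>R t1"
    using principal(1) unfolding principal_dir_def by blast
  obtain \<xi>2 where x2: "dF f p \<xi>2 = t2" "dF n p \<xi>2 = - \<kappa>2 *\<^sub>R t2"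
    using principal(2) unfolding principal_dir_def by blast
  have lf: "linear (dF f p)" "linear (dF n p)" "linear (dF ?S p)"
    using dF_lin fC nC SC by blast+
  have tt: "t1 \<bullet> t1 = 1" "t2 \<bullet> t2 = 1" "t1 \<bullet> t2 = 0" "t2 \<bullet> t1 = 0"
    using frame by (simp_all add: norm_eq_1 inner_commute)
  note ip = ip2[OF tt(1-3)]
  have ip1: "(u1 *\<^sub>R t1 + u2 *\<^sub>R t2) \<bullet> t1 = u1" "(u1 *\<^sub>R t1 + u2 *\<^sub>R t2) \<bullet> t2 = u2" for u1 u2
    using tt by (simp_all add: inner_add_left)
  have tind: "u1 = 0 \<and> u2 = 0" if "u1 *\<^sub>R t1 + u2 *\<^sub>R t2 = 0" for u1 u2
    using ip1[of u1 u2] that frame(1,2) by auto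
  have dfl: "dF f p (u1 *\<^sub>R \<xi>1 + u2 *\<^sub>R \<xi>2) = u1 *\<^sub>R t1 + u2 *\<^sub>R t2" for u1 u2
    using lf(1) x1 x2 by (simp add: linear_add linear_scale)
  have dnl: "dF n p (u1 *\<^sub>R \<xi>1 + u2 *\<^sub>R \<xi>2) = (- \<kappa>1 * u1) *\<^sub>R t1 + (- \<kappa>2 * u2) *\<^sub>R t2" for u1 u2
    using lf(2) x1 x2 by (simp add: linear_add linear_scale mult.commute)
  have det: "fst \<xi>1 * snd \<xi>2 - snd \<xi>1 * fst \<xi>2 \<noteq> 0"
  proof
    assume d0: "fst \<xi>1 * snd \<xi>2 - snd \<xi>1 * fst \<xi>2 = 0"
    have e1: "snd \<xi>2 *\<^sub>R \<xi>1 + (- snd \<xi>1) *\<^sub>R \<xi>2 = 0" using d0 by (simp add: prod_eq_iff algebra_simps)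
    have e2: "fst \<xi>2 *\<^sub>R \<xi>1 + (- fst \<xi>1) *\<^sub>R \<xi>2 = 0" using d0 by (simp add: prod_eq_iff algebra_simps)
    have "snd \<xi>2 *\<^sub>R t1 + (- snd \<xi>1) *\<^sub>R t2 = 0" using dfl[of "snd \<xi>2" "- snd \<xi>1"] e1 lf(1) linear_0 by metis
    then have s: "snd \<xi>2 = 0" "snd \<xi>1 = 0" using tind by fastforce+
    have "fst \<xi>2 *\<^sub>R t1 + (- fst \<xi>1) *\<^sub>R t2 = 0" using dfl[of "fst \<xi>2" "- fst \<xi>1"] e2 lf(1) linear_0 by metis
    then have "fst \<xi>2 = 0" "fst \<xi>1 = 0" using tind by fastforce+
    then have "\<xi>1 = 0" using s by (simp add: prod_eq_iff)
    then have "t1 = 0" using x1(1) lf(1) linear_0 by metis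
    then show False using frame(1) by simp
  qed
  define c1 where "c1 \<xi> = dF f p \<xi> \<bullet> t1" for \<xi>
  define c2 where "c2 \<xi> = dF f p \<xi> \<bullet> t2" for \<xi>
  have c_l: "c1 (u1 *\<^sub>R \<xi>1 + u2 *\<^sub>R \<xi>2) = u1" "c2 (u1 *\<^sub>R \<xi>1 + u2 *\<^sub>R \<xi>2) = u2" for u1 u2
    unfolding c1_def c2_def dfl ip1 by simp_all
  have coord: "\<xi> = c1 \<xi> *\<^sub>R \<xi>1 + c2 \<xi> *\<^sub>R \<xi>2" for \<xi>
  proof -
    define k1 where "k1 = (fst \<xi> * snd \<xi>2 - snd \<xi> * fst \<xi>2) / (fst \<xi>1 * snd \<xi>2 - snd \<xi>1 * fst \<xi>2)"
    define k2 where "k2 = (fst \<xi>1 * snd \<xi> - snd \<xi>1 * fst \<xi>) / (fst \<xi>1 * snd \<xi>2 - snd \<xi>1 * fst \<xi>2)"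
    have "\<xi> = k1 *\<^sub>R \<xi>1 + k2 *\<^sub>R \<xi>2"
      using inv2[OF det, of "fst \<xi>" "snd \<xi>"] unfolding k1_def k2_def by (simp add: prod_eq_iff mult.commute)
    moreover have "c1 (k1 *\<^sub>R \<xi>1 + k2 *\<^sub>R \<xi>2) = k1" "c2 (k1 *\<^sub>R \<xi>1 + k2 *\<^sub>R \<xi>2) = k2" using c_l by simp_all
    ultimately show ?thesis by metis
  qed
  have dfx: "dF f p \<xi> = c1 \<xi> *\<^sub>R t1 + c2 \<xi> *\<^sub>R t2" for \<xi> using dfl coord by metis
  have dnx: "dF n p \<xi> = (- \<kappa>1 * c1 \<xi>) *\<^sub>R t1 + (- \<kappa>2 * c2 \<xi>) *\<^sub>R t2" for \<xi> using dnl coord by metis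
  have conj_form: "dF n p \<xi> \<bullet> dF f p \<eta> = - (\<kappa>1 * c1 \<xi> * c1 \<eta> + \<kappa>2 * c2 \<xi> * c2 \<eta>)" for \<xi> \<eta>
    unfolding dnx dfx ip by simp
  have net_form: "dF n p \<eta> \<bullet> (dF f p \<xi> + r p *\<^sub>R dF n p \<xi>) =
      - (\<kappa>1 * c1 \<eta> * c1 \<xi> * (1 - r p * \<kappa>1) + \<kappa>2 * c2 \<eta> * c2 \<xi> * (1 - r p * \<kappa>2))" for \<xi> \<eta>
    unfolding dnx dfx by (simp add: inner_add_left inner_add_right tt algebra_simps)
  have c_scale: "c1 (c *\<^sub>R \<xi>) = c * c1 \<xi>" "c2 (c *\<^sub>R \<xi>) = c * c2 \<xi>" for c \<xi>
    unfolding c1_def c2_def using lf(1) by (simp_all add: linear_scale)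
  have conj_iff: "conjugate f n p (dF f p \<xi>) (dF f p \<eta>) \<longleftrightarrow> \<kappa>1 * c1 \<xi> * c1 \<eta> + \<kappa>2 * c2 \<xi> * c2 \<eta> = 0" for \<xi> \<eta>
  proof
    assume "conjugate f n p (dF f p \<xi>) (dF f p \<eta>)"
    then obtain \<xi>' \<eta>' where e: "dF f p \<xi> = dF f p \<xi>'" "dF f p \<eta> = dF f p \<eta>'" "- (dF n p \<xi>' \<bullet> dF f p \<eta>') = 0"
      unfolding conjugate_def by blast
    have "c1 \<xi> = c1 \<xi>'" "c2 \<xi> = c2 \<xi>'" "c1 \<eta> = c1 \<eta>'" "c2 \<eta> = c2 \<eta>'" unfolding c1_def c2_def e by simp_all
    then show "\<kappa>1 * c1 \<xi> * c1 \<eta> + \<kappa>2 * c2 \<xi> * c2 \<eta> = 0" using e(3) conj_form[of \<xi>' \<eta>'] by simp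
  next
    assume "\<kappa>1 * c1 \<xi> * c1 \<eta> + \<kappa>2 * c2 \<xi> * c2 \<eta> = 0"
    then have "- (dF n p \<xi> \<bullet> dF f p \<eta>) = 0" using conj_form[of \<xi> \<eta>] by simp
    then show "conjugate f n p (dF f p \<xi>) (dF f p \<eta>)" unfolding conjugate_def by blast
  qed
  have dS_inj: "v = 0" if "dF ?S p v = 0" for v
  proof -
    have "dF ?S p v = fst v *\<^sub>R pu ?S p + snd v *\<^sub>R pv ?S p"
      unfolding pu_def pv_def using lin_pair[OF lf(3), of "fst v" "snd v"] by simp
    then show ?thesis using that S_regular unfolding regular_net_def by (metis prod.collapse zero_prod_def)
  qed
  let ?a = "a1 *\<^sub>R t1 + a2 *\<^sub>R t2"
  let ?b = "b1 *\<^sub>R t1 + b2 *\<^sub>R t2"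
  have a_img: "?a = dF f p (a1 *\<^sub>R \<xi>1 + a2 *\<^sub>R \<xi>2)" "?b = dF f p (b1 *\<^sub>R \<xi>1 + b2 *\<^sub>R \<xi>2)"
    using dfl by simp_all
  have ab_det: "a1 * b2 - a2 * b1 \<noteq> 0"
  proof
    assume d0: "a1 * b2 - a2 * b1 = 0"
    have "b2 *\<^sub>R ?a + (- a2) *\<^sub>R ?b = (b2 * a1 - a2 * b1) *\<^sub>R t1"
      by (simp add: algebra_simps)
    also have "\<dots> = 0" using d0 by (simp add: algebra_simps)
    finally have z: "b2 = 0 \<and> a2 = 0" using nonpar unfolding non_parallel_def by fastforce
    have "b1 *\<^sub>R ?a + (- a1) *\<^sub>R ?b = 0" using z by simp
    then have "b1 = 0 \<and> a1 = 0" using nonpar unfolding non_parallel_def by fastforce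
    then have "?a = 0" using z by simp
    then show False using nonpar unfolding non_parallel_def by (metis scaleR_one scaleR_zero_left add.right_neutral zero_neq_one)
  qed
  show ?thesis
  proof
    assume "L_conj f n r p ?a ?b"
    then obtain D q where D: "diffeo D" "D q = p"
      and cu: "conjugate f n p (pu (f \<circ> D) q) ?a" and cv: "conjugate f n p (pv (f \<circ> D) q) ?b"
      and net: "L_conj_net (?S \<circ> D) (plane_lift f n \<circ> D) q (pu (?S \<circ> D) q) (pv (?S \<circ> D) q)"
      unfolding L_conj_def by blast
    have DC: "C2 D" using D(1) smooth_C2 unfolding diffeo_def by blast
    define \<alpha> where "\<alpha> = dF D q (1,0)"
    define \<beta> where "\<beta> = dF D q (0,1)"
    have puf: "pu (f \<circ> D) q = dF f p \<alpha>" "pv (f \<circ> D) q = dF f p \<beta>"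
      using pu_comp[OF fC DC, of q] D(2) \<alpha>_def \<beta>_def by simp_all
    have h1: "\<kappa>1 * c1 \<alpha> * a1 + \<kappa>2 * c2 \<alpha> * a2 = 0"
      using cu unfolding puf a_img conj_iff c_l .
    have h2: "\<kappa>1 * c1 \<beta> * b1 + \<kappa>2 * c2 \<beta> * b2 = 0"
      using cv unfolding puf a_img conj_iff c_l .
    obtain D' q' where D': "diffeo D'" "D' q' = q"
      and vp1: "vec_parallel (pu (?S \<circ> D \<circ> D') q') (pu (?S \<circ> D) q)"
      and vp2: "vec_parallel (pv (?S \<circ> D \<circ> D') q') (pv (?S \<circ> D) q)"
      and pp: "parallel_to (puv (?S \<circ> D \<circ> D') q') ((plane_lift f n \<circ> D \<circ> D') q')"
      using net unfolding L_conj_net_def by blast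
    have D'C: "C2 D'" using D'(1) smooth_C2 unfolding diffeo_def by blast
    define E where "E = D \<circ> D'"
    have EC: "C2 E" unfolding E_def by (rule C2_comp[OF DC D'C])
    have Eq: "E q' = p" unfolding E_def using D D' by simp
    have G: "?S \<circ> D \<circ> D' = ?S \<circ> E" unfolding E_def by (simp add: o_assoc)
    have P: "(plane_lift f n \<circ> D \<circ> D') q' = plane_lift f n (E q')" unfolding E_def by simp
    define \<alpha>' where "\<alpha>' = dF E q' (1,0)"
    define \<beta>' where "\<beta>' = dF E q' (0,1)"
    note A = lemA[OF fC nC SC EC n_normal, of q']
    note A0 = lemA[OF fC nC SC DC n_normal, of q]
    from vp1 obtain k1 where k1: "pu (?S \<circ> E) q' = k1 *\<^sub>R pu (?S \<circ> D) q" "pu (?S \<circ> E) q' \<noteq> 0" "pu (?S \<circ> D) q \<noteq> 0"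
      unfolding vec_parallel_def G by blast
    from vp2 obtain k2 where k2: "pv (?S \<circ> E) q' = k2 *\<^sub>R pv (?S \<circ> D) q" "pv (?S \<circ> E) q' \<noteq> 0" "pv (?S \<circ> D) q \<noteq> 0"
      unfolding vec_parallel_def G by blast
    have e1: "dF ?S p \<alpha>' = k1 *\<^sub>R dF ?S p \<alpha>" using k1(1) A(1) A0(1) Eq D(2) \<alpha>_def \<alpha>'_def by simp
    have e2: "dF ?S p \<beta>' = k2 *\<^sub>R dF ?S p \<beta>" using k2(1) A(2) A0(2) Eq D(2) \<beta>_def \<beta>'_def by simp
    have "dF ?S p (\<alpha>' - k1 *\<^sub>R \<alpha>) = 0" using e1 lf(3) by (simp add: linear_diff linear_scale)
    then have "\<alpha>' - k1 *\<^sub>R \<alpha> = 0" by (rule dS_inj)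
    then have \<alpha>e: "\<alpha>' = k1 *\<^sub>R \<alpha>" by simp
    have "dF ?S p (\<beta>' - k2 *\<^sub>R \<beta>) = 0" using e2 lf(3) by (simp add: linear_diff linear_scale)
    then have "\<beta>' - k2 *\<^sub>R \<beta> = 0" by (rule dS_inj)
    then have \<beta>e: "\<beta>' = k2 *\<^sub>R \<beta>" by simp
    have k1z: "k1 \<noteq> 0" using k1(1,2) by auto
    have k2z: "k2 \<noteq> 0" using k2(1,2) by auto
    have \<alpha>z: "\<alpha> \<noteq> 0"
    proof
      assume "\<alpha> = 0"
      then have "pu (?S \<circ> D) q = 0" using A0(1) D(2) \<alpha>_def lf(3) linear_0 by metis
      then show False using k1(3) by simp
    qed
    have "parallel_to (puv (?S \<circ> E) q') (plane_lift f n (E q'))" using pp unfolding G P .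
    then have "dF n p \<beta>' \<bullet> (dF f p \<alpha>' + r p *\<^sub>R dF n p \<alpha>') = 0"
      using A(5) Eq \<alpha>'_def \<beta>'_def by simp
    then have "k1 * k2 * (\<kappa>1 * c1 \<beta> * c1 \<alpha> * (1 - r p * \<kappa>1) + \<kappa>2 * c2 \<beta> * c2 \<alpha> * (1 - r p * \<kappa>2)) = 0"
      unfolding net_form \<alpha>e \<beta>e c_scale by (simp add: algebra_simps)
    then have h3: "\<kappa>1 * c1 \<beta> * c1 \<alpha> * (1 - r p * \<kappa>1) + \<kappa>2 * c2 \<beta> * c2 \<alpha> * (1 - r p * \<kappa>2) = 0"
      using k1z k2z by simp
    have xz: "c1 \<alpha> \<noteq> 0 \<or> c2 \<alpha> \<noteq> 0" using \<alpha>z coord[of \<alpha>] by auto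
    have az: "\<kappa>2 * a2 \<noteq> 0 \<or> - \<kappa>1 * a1 \<noteq> 0" using ab_det kappa by auto
    have bz: "\<kappa>2 * b2 \<noteq> 0 \<or> - \<kappa>1 * b1 \<noteq> 0" using ab_det kappa by auto
    obtain l where l: "c1 \<alpha> = l * (\<kappa>2 * a2)" "c2 \<alpha> = l * (- \<kappa>1 * a1)"
      using par2[of "c1 \<alpha>" "- \<kappa>1 * a1" "c2 \<alpha>" "\<kappa>2 * a2"] h1 az by (auto simp: algebra_simps)
    obtain m where m: "c1 \<beta> = m * (\<kappa>2 * b2)" "c2 \<beta> = m * (- \<kappa>1 * b1)"
      using par2[of "c1 \<beta>" "- \<kappa>1 * b1" "c2 \<beta>" "\<kappa>2 * b2"] h2 bz by (auto simp: algebra_simps)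
    have lz: "l \<noteq> 0" using xz l by auto
    have \<beta>z: "\<beta> \<noteq> 0"
    proof
      assume "\<beta> = 0"
      then have "pv (?S \<circ> D) q = 0" using A0(2) D(2) \<beta>_def lf(3) linear_0 by metis
      then show False using k2(3) by simp
    qed
    have mz: "m \<noteq> 0" using \<beta>z coord[of \<beta>] m by auto
    have "l * m * \<kappa>1 * \<kappa>2 * (\<kappa>2 * a2 * b2 * (1 - r p * \<kappa>1) + \<kappa>1 * a1 * b1 * (1 - r p * \<kappa>2)) = 0"
      using h3 unfolding l m by (simp add: algebra_simps)
    then have br: "\<kappa>2 * a2 * b2 * (1 - r p * \<kappa>1) + \<kappa>1 * a1 * b1 * (1 - r p * \<kappa>2) = 0"
      using lz mz kappa by simp
    have "\<kappa>1 * \<kappa>2 * ((inverse \<kappa>2 - r p) * a1 * b1 + (inverse \<kappa>1 - r p) * a2 * b2) =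
       \<kappa>2 * a2 * b2 * (1 - r p * \<kappa>1) + \<kappa>1 * a1 * b1 * (1 - r p * \<kappa>2)"
      using kappa by (simp add: field_simps)
    then show "(inverse \<kappa>2 - r p) * a1 * b1 + (inverse \<kappa>1 - r p) * a2 * b2 = 0"
      using br kappa by simp
  next
    assume T: "(inverse \<kappa>2 - r p) * a1 * b1 + (inverse \<kappa>1 - r p) * a2 * b2 = 0"
    define x1 where "x1 = \<kappa>2 * a2"
    define x2 where "x2 = - \<kappa>1 * a1"
    define y1 where "y1 = \<kappa>2 * b2"
    define y2 where "y2 = - \<kappa>1 * b1"
    define \<alpha> where "\<alpha> = x1 *\<^sub>R \<xi>1 + x2 *\<^sub>R \<xi>2"
    define \<beta> where "\<beta> = y1 *\<^sub>R \<xi>1 + y2 *\<^sub>R \<xi>2"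
    have c\<alpha>: "c1 \<alpha> = x1" "c2 \<alpha> = x2" "c1 \<beta> = y1" "c2 \<beta> = y2" unfolding \<alpha>_def \<beta>_def c_l by simp_all
    have "fst \<alpha> * snd \<beta> - snd \<alpha> * fst \<beta> = (x1 * y2 - x2 * y1) * (fst \<xi>1 * snd \<xi>2 - snd \<xi>1 * fst \<xi>2)"
      unfolding \<alpha>_def \<beta>_def by (simp add: algebra_simps)
    moreover have "x1 * y2 - x2 * y1 = \<kappa>1 * \<kappa>2 * (a1 * b2 - a2 * b1)"
      unfolding x1_def x2_def y1_def y2_def by (simp add: algebra_simps)
    ultimately have detab: "fst \<alpha> * snd \<beta> - snd \<alpha> * fst \<beta> \<noteq> 0" using det ab_det kappa by simp
    define D where "D = (\<lambda>z. p + (fst z *\<^sub>R \<alpha> + snd z *\<^sub>R \<beta>))"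
    have Dd: "diffeo D" unfolding D_def by (rule diffeo_affine[OF detab])
    have DC: "C2 D" using Dd smooth_C2 unfolding diffeo_def by blast
    have D0: "D 0 = p" unfolding D_def by simp
    have dD: "dF D 0 (1,0) = \<alpha>" "dF D 0 (0,1) = \<beta>" unfolding D_def affine_deriv[OF lin_M] by simp_all
    have puf: "pu (f \<circ> D) 0 = dF f p \<alpha>" "pv (f \<circ> D) 0 = dF f p \<beta>"
      using pu_comp[OF fC DC, of 0] D0 dD by simp_all
    have cu: "conjugate f n p (pu (f \<circ> D) 0) ?a"
      unfolding puf a_img conj_iff c_l c\<alpha> x1_def x2_def by (simp add: algebra_simps)
    have cv: "conjugate f n p (pv (f \<circ> D) 0) ?b"
      unfolding puf a_img conj_iff c_l c\<alpha> y1_def y2_def by (simp add: algebra_simps)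
    note A0 = lemA[OF fC nC SC DC n_normal, of 0]
    have \<alpha>z: "\<alpha> \<noteq> 0" using detab by auto
    have \<beta>z: "\<beta> \<noteq> 0" using detab by auto
    have puS: "pu (?S \<circ> D) 0 \<noteq> 0"
    proof
      assume "pu (?S \<circ> D) 0 = 0"
      then have "dF ?S p \<alpha> = 0" using A0(1) D0 dD by simp
      then show False using dS_inj \<alpha>z by blast
    qed
    have pvS: "pv (?S \<circ> D) 0 \<noteq> 0"
    proof
      assume "pv (?S \<circ> D) 0 = 0"
      then have "dF ?S p \<beta> = 0" using A0(2) D0 dD by simp
      then show False using dS_inj \<beta>z by blast
    qed
    have br: "\<kappa>2 * a2 * b2 * (1 - r p * \<kappa>1) + \<kappa>1 * a1 * b1 * (1 - r p * \<kappa>2) = 0"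
    proof -
      have "\<kappa>1 * \<kappa>2 * ((inverse \<kappa>2 - r p) * a1 * b1 + (inverse \<kappa>1 - r p) * a2 * b2) =
         \<kappa>2 * a2 * b2 * (1 - r p * \<kappa>1) + \<kappa>1 * a1 * b1 * (1 - r p * \<kappa>2)"
        using kappa by (simp add: field_simps)
      then show ?thesis using T by simp
    qed
    have "dF n p \<beta> \<bullet> (dF f p \<alpha> + r p *\<^sub>R dF n p \<alpha>) = - (\<kappa>1 * \<kappa>2 * (\<kappa>2 * a2 * b2 * (1 - r p * \<kappa>1) + \<kappa>1 * a1 * b1 * (1 - r p * \<kappa>2)))"
      unfolding net_form c\<alpha> x1_def x2_def y1_def y2_def by (simp add: algebra_simps)
    then have z: "dF n p \<beta> \<bullet> (dF f p \<alpha> + r p *\<^sub>R dF n p \<alpha>) = 0" using br by simp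
    have pp: "parallel_to (puv (?S \<circ> D) 0) (plane_lift f n (D 0))"
      using A0(5) z D0 dD by simp
    have net: "L_conj_net (?S \<circ> D) (plane_lift f n \<circ> D) 0 (pu (?S \<circ> D) 0) (pv (?S \<circ> D) 0)"
      unfolding L_conj_net_def
    proof (intro exI[of _ id] exI[of _ 0] conjI)
      show "diffeo id" by (rule diffeo_id)
      show "id 0 = (0::param)" by simp
      show "vec_parallel (pu (?S \<circ> D \<circ> id) 0) (pu (?S \<circ> D) 0)"
        unfolding vec_parallel_def using puS by (auto intro: exI[of _ 1])
      show "vec_parallel (pv (?S \<circ> D \<circ> id) 0) (pv (?S \<circ> D) 0)"
        unfolding vec_parallel_def using pvS by (auto intro: exI[of _ 1])
      show "parallel_to (pu (?S \<circ> D \<circ> id) 0) ((plane_lift f n \<circ> D \<circ> id) 0)" using A0(3) by simp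
      show "parallel_to (pv (?S \<circ> D \<circ> id) 0) ((plane_lift f n \<circ> D \<circ> id) 0)" using A0(4) by simp
      show "parallel_to (puv (?S \<circ> D \<circ> id) 0) ((plane_lift f n \<circ> D \<circ> id) 0)" using pp by simp
    qed
    show "L_conj f n r p ?a ?b" unfolding L_conj_def
      using Dd D0 cu cv net by blast
  qed
qed

end
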